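(* For every graph $G$ of order $n$, $\gamma_{rdR}(G)\le n+\gamma(G)$. This bound is sharp: for every graph $H$ with no isolated vertices, the graph $H'$ obtained from $H$ by attaching two new pendant vertices to each vertex of $H$ satisfies $\gamma_{rdR}(H')=|V(H')|+\gamma(H')$.
   Context: All graphs are finite and simple. An RDRD function of $G$ is a function $f:V(G)\to\{0,1,2,3\}$ such that every vertex with value $0$ has at least two neighbors with value $2$ or at least one neighbor with value $3$, every vertex with value $1$ has a neighbor with value $2$ or $3$, and the subgraph induced by the vertices with value $0$ has no isolated vertices; $\gamma_{rdR}(G)$ is the minimum of $\sum_v f(v)$ over RDRD functions. $\gamma(G)$ denotes the domination number. *)

theory Defs
  imports Main
begin

definition graph :: "'a set \<Rightarrow> ('a \<Rightarrow> 'a \<Rightarrow> bool) \<Rightarrow> bool" where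
  "graph V E \<longleftrightarrow> finite V \<and>
     (\<forall>u v. E u v \<longrightarrow> u \<in> V \<and> v \<in> V \<and> u \<noteq> v \<and> E v u)"

definition rdrd_fun :: "'a set \<Rightarrow> ('a \<Rightarrow> 'a \<Rightarrow> bool) \<Rightarrow> ('a \<Rightarrow> nat) \<Rightarrow> bool" where
  "rdrd_fun V E f \<longleftrightarrow>
     (\<forall>v\<in>V. f v \<le> 3) \<and>
     (\<forall>v\<in>V. f v = 0 \<longrightarrow>
        (card {u \<in> V. E v u \<and> f u = 2} \<ge> 2 \<or> (\<exists>u\<in>V. E v u \<and> f u = 3))) \<and>
     (\<forall>v\<in>V. f v = 1 \<longrightarrow> (\<exists>u\<in>V. E v u \<and> (f u = 2 \<or> f u = 3))) \<and>
     (\<forall>v\<in>V. f v = 0 \<longrightarrow> (\<exists>u\<in>V. E v u \<and> f u = 0))"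

definition gamma_rdR :: "'a set \<Rightarrow> ('a \<Rightarrow> 'a \<Rightarrow> bool) \<Rightarrow> nat" where
  "gamma_rdR V E = Min {(\<Sum>v\<in>V. f v) | f. rdrd_fun V E f}"

definition dominating_set :: "'a set \<Rightarrow> ('a \<Rightarrow> 'a \<Rightarrow> bool) \<Rightarrow> 'a set \<Rightarrow> bool" where
  "dominating_set V E S \<longleftrightarrow> S \<subseteq> V \<and> (\<forall>v\<in>V. v \<in> S \<or> (\<exists>u\<in>S. E v u))"

definition domination_number :: "'a set \<Rightarrow> ('a \<Rightarrow> 'a \<Rightarrow> bool) \<Rightarrow> nat" where
  "domination_number V E = Min (card ` {S. dominating_set V E S})"

text \<open>H': attach two new pendant vertices Inr (v,False), Inr (v,True) to each vertex v.\<close>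
definition pend_V :: "'a set \<Rightarrow> ('a + 'a \<times> bool) set" where
  "pend_V V = Inl ` V \<union> Inr ` (V \<times> UNIV)"

fun pend_E :: "'a set \<Rightarrow> ('a \<Rightarrow> 'a \<Rightarrow> bool) \<Rightarrow> ('a + 'a \<times> bool) \<Rightarrow> ('a + 'a \<times> bool) \<Rightarrow> bool" where
  "pend_E V E (Inl u) (Inl v) = E u v"
| "pend_E V E (Inl u) (Inr (v, b)) = (u = v \<and> u \<in> V)"
| "pend_E V E (Inr (u, b)) (Inl v) = (u = v \<and> u \<in> V)"
| "pend_E V E (Inr _) (Inr _) = False"

end

theory Submission
  imports Defs
begin

lemma dn_exists:
  assumes "graph V E"
  shows "\<exists>S. dominating_set V E S \<and> card S = domination_number V E"
proof -
  have fin: "finite V" using assms by (simp add: graph_def)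
  have "{S. dominating_set V E S} \<subseteq> Pow V" by (auto simp: dominating_set_def)
  hence f: "finite (card ` {S. dominating_set V E S})"
    using fin by (meson finite_Pow_iff finite_imageI finite_subset)
  have "dominating_set V E V" by (simp add: dominating_set_def)
  hence ne: "card ` {S. dominating_set V E S} \<noteq> {}" by blast
  have "domination_number V E \<in> card ` {S. dominating_set V E S}"
    unfolding domination_number_def using Min_in[OF f ne] .
  thus ?thesis by auto
qed

lemma dn_le:
  assumes "graph V E" "dominating_set V E S"
  shows "domination_number V E \<le> card S"
proof -
  have fin: "finite V" using assms by (simp add: graph_def)
  have "{S. dominating_set V E S} \<subseteq> Pow V" by (auto simp: dominating_set_def)
  hence f: "finite (card ` {S. dominating_set V E S})"
    using fin by (meson finite_Pow_iff finite_imageI finite_subset)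
  show ?thesis unfolding domination_number_def
    using Min_le[OF f] assms(2) by blast
qed

lemma sums_finite:
  assumes "finite V"
  shows "finite {(\<Sum>v\<in>V. f v) | f. rdrd_fun V E f}"
proof -
  have "{(\<Sum>v\<in>V. f v) | f. rdrd_fun V E f} \<subseteq> {..3 * card V}"
  proof
    fix x assume "x \<in> {(\<Sum>v\<in>V. f v) | f. rdrd_fun V E f}"
    then obtain f where x: "x = (\<Sum>v\<in>V. f v)" and r: "rdrd_fun V E f" by blast
    have "(\<Sum>v\<in>V. f v) \<le> (\<Sum>v\<in>V. 3)"
      by (rule sum_mono) (use r in \<open>auto simp: rdrd_fun_def\<close>)
    thus "x \<in> {..3 * card V}" using x by simp
  qed
  thus ?thesis by (rule finite_subset) simp
qed

lemma rdR_le: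
  assumes "finite V" "rdrd_fun V E f"
  shows "gamma_rdR V E \<le> (\<Sum>v\<in>V. f v)"
  unfolding gamma_rdR_def using Min_le[OF sums_finite[OF assms(1)]] assms(2) by blast

lemma rdR_ge:
  assumes "finite V" "rdrd_fun V E g" "\<And>f. rdrd_fun V E f \<Longrightarrow> k \<le> (\<Sum>v\<in>V. f v)"
  shows "k \<le> gamma_rdR V E"
proof -
  have ne: "{(\<Sum>v\<in>V. f v) | f. rdrd_fun V E f} \<noteq> {}" using assms(2) by blast
  have "gamma_rdR V E \<in> {(\<Sum>v\<in>V. f v) | f. rdrd_fun V E f}"
    unfolding gamma_rdR_def using Min_in[OF sums_finite[OF assms(1)] ne] .
  then obtain f where "gamma_rdR V E = (\<Sum>v\<in>V. f v)" "rdrd_fun V E f" by blast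
  thus ?thesis using assms(3) by simp
qed

lemma part1:
  assumes g: "graph V E"
  shows "gamma_rdR V E \<le> card V + domination_number V E"
proof -
  have fin: "finite V" using g by (simp add: graph_def)
  obtain S where S: "dominating_set V E S" "card S = domination_number V E"
    using dn_exists[OF g] by blast
  have SV: "S \<subseteq> V" using S by (simp add: dominating_set_def)
  define f where "f v = (if v \<in> S then 2 else (1::nat))" for v
  have r: "rdrd_fun V E f"
    unfolding rdrd_fun_def
  proof (intro conjI ballI impI)
    fix v assume "v \<in> V" "f v = 1"
    hence "v \<notin> S" by (auto simp: f_def)
    then obtain u where "u \<in> S" "E v u" using S(1) \<open>v \<in> V\<close> by (auto simp: dominating_set_def)
    thus "\<exists>u\<in>V. E v u \<and> (f u = 2 \<or> f u = 3)" using SV by (auto simp: f_def)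
  qed (auto simp: f_def split: if_splits)
  have "(\<Sum>v\<in>V. f v) = (\<Sum>v\<in>S. f v) + (\<Sum>v\<in>V-S. f v)"
    using fin SV by (metis add.commute sum.subset_diff)
  also have "(\<Sum>v\<in>S. f v) = 2 * card S" by (simp add: f_def)
  also have "(\<Sum>v\<in>V-S. f v) = card (V - S)" by (simp add: f_def)
  also have "card (V - S) = card V - card S" using SV fin by (simp add: card_Diff_subset finite_subset)
  also have "2 * card S + (card V - card S) = card V + card S"
    using card_mono[OF fin SV] by simp
  finally show ?thesis using rdR_le[OF fin r] S(2) by simp
qed

lemma pend_graph:
  assumes "graph V E"
  shows "graph (pend_V V) (pend_E V E)"
proof -
  have "pend_E V E u v \<Longrightarrow> u \<in> pend_V V \<and> v \<in> pend_V V \<and> u \<noteq> v \<and> pend_E V E v u" for u v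
    by (erule pend_E.elims) (use assms in \<open>auto simp: graph_def pend_V_def\<close>)
  moreover have "finite (pend_V V)" using assms by (simp add: graph_def pend_V_def)
  ultimately show ?thesis unfolding graph_def by blast
qed

lemma card_pend:
  assumes "finite V"
  shows "card (pend_V V) = 3 * card V"
proof -
  have "card (pend_V V) = card (Inl ` V :: ('a + 'a \<times> bool) set) + card (Inr ` (V \<times> (UNIV::bool set)) :: ('a + 'a \<times> bool) set)"
    unfolding pend_V_def using assms by (intro card_Un_disjoint) auto
  also have "\<dots> = card V + card (V \<times> (UNIV::bool set))"
    by (simp add: card_image)
  also have "card (V \<times> (UNIV::bool set)) = 2 * card V" by (simp add: card_cartesian_product)
  finally show ?thesis by simp
qed

lemma sum_pend:
  assumes "finite V"
  shows "(\<Sum>x\<in>pend_V V. f x) = (\<Sum>v\<in>V. f (Inl v) + f (Inr (v,False)) + f (Inr (v,True)))"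
proof -
  have "(\<Sum>x\<in>pend_V V. f x) = (\<Sum>x\<in>Inl ` V. f x) + (\<Sum>x\<in>Inr ` (V \<times> (UNIV::bool set)). f x)"
    unfolding pend_V_def using assms by (intro sum.union_disjoint) auto
  also have "(\<Sum>x\<in>Inl ` V. f x) = (\<Sum>v\<in>V. f (Inl v))" by (simp add: sum.reindex)
  also have "(\<Sum>x\<in>Inr ` (V \<times> (UNIV::bool set)). f x) = (\<Sum>p\<in>V \<times> (UNIV::bool set). f (Inr p))"
    by (simp add: sum.reindex)
  also have "\<dots> = (\<Sum>v\<in>V. \<Sum>b\<in>(UNIV::bool set). f (Inr (v,b)))"
    by (simp add: sum.cartesian_product)
  also have "\<dots> = (\<Sum>v\<in>V. f (Inr (v,False)) + f (Inr (v,True)))"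
    by (simp add: UNIV_bool)
  finally show ?thesis by (simp add: sum.distrib add.assoc)
qed

lemma local4:
  assumes r: "rdrd_fun (pend_V V) (pend_E V E) f" and v: "v \<in> V"
  shows "4 \<le> f (Inl v) + f (Inr (v,False)) + f (Inr (v,True))"
proof -
  have inl: "Inl v \<in> pend_V V" using v by (simp add: pend_V_def)
  have nb: "\<And>u. pend_E V E (Inr (v,b)) u \<Longrightarrow> u = Inl v" for b
    subgoal for u by (cases u) auto done
  have pend: "f (Inr (v,b)) \<ge> 1 \<and> (f (Inr (v,b)) = 1 \<longrightarrow> f (Inl v) \<ge> 2)" for b
  proof -
    have p: "Inr (v,b) \<in> pend_V V" using v by (simp add: pend_V_def)
    have c1: "f (Inr (v,b)) \<noteq> 0"
    proof
      assume z: "f (Inr (v,b)) = 0"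
      then obtain u where "u \<in> pend_V V" "pend_E V E (Inr (v,b)) u" "f u = 0"
        using r p unfolding rdrd_fun_def by blast
      hence fz: "f (Inl v) = 0" using nb by blast
      have "card {u \<in> pend_V V. pend_E V E (Inr (v,b)) u \<and> f u = 2} \<ge> 2 \<or>
            (\<exists>u\<in>pend_V V. pend_E V E (Inr (v,b)) u \<and> f u = 3)"
        using r p z unfolding rdrd_fun_def by blast
      moreover have "{u \<in> pend_V V. pend_E V E (Inr (v,b)) u \<and> f u = 2} = {}"
        using nb fz by force
      ultimately show False using nb fz by force
    qed
    moreover have "f (Inr (v,b)) = 1 \<longrightarrow> f (Inl v) \<ge> 2"
    proof
      assume "f (Inr (v,b)) = 1"
      then obtain u where "u \<in> pend_V V" "pend_E V E (Inr (v,b)) u" "f u = 2 \<or> f u = 3"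
        using r p unfolding rdrd_fun_def by blast
      thus "f (Inl v) \<ge> 2" using nb by force
    qed
    ultimately show ?thesis by simp
  qed
  from pend[of False] pend[of True] show ?thesis by linarith
qed

lemma part2:
  assumes g: "graph V E"
  shows "gamma_rdR (pend_V V) (pend_E V E) = card (pend_V V) + domination_number (pend_V V) (pend_E V E)"
proof -
  have fin: "finite V" using g by (simp add: graph_def)
  have g': "graph (pend_V V) (pend_E V E)" by (rule pend_graph[OF g])
  have fin': "finite (pend_V V)" using g' by (simp add: graph_def)
  have dom: "dominating_set (pend_V V) (pend_E V E) (Inl ` V)"
    unfolding dominating_set_def pend_V_def by auto
  have dn1: "domination_number (pend_V V) (pend_E V E) \<le> card V"
    using dn_le[OF g' dom] by (simp add: card_image)
  obtain S where S: "dominating_set (pend_V V) (pend_E V E) S"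
    "card S = domination_number (pend_V V) (pend_E V E)" using dn_exists[OF g'] by blast
  have finS: "finite S" using S(1) fin' by (auto simp: dominating_set_def intro: finite_subset)
  define h where "h v = (if Inl v \<in> S then Inl v else Inr (v, False))" for v
  have hS: "h ` V \<subseteq> S"
  proof
    fix x assume "x \<in> h ` V"
    then obtain v where v: "v \<in> V" "x = h v" by blast
    show "x \<in> S"
    proof (cases "Inl v \<in> S")
      case True thus ?thesis using v by (simp add: h_def)
    next
      case False
      have "Inr (v,False) \<in> pend_V V" using v by (simp add: pend_V_def)
      hence "Inr (v,False) \<in> S \<or> (\<exists>u\<in>S. pend_E V E (Inr (v,False)) u)"
        using S(1) by (simp add: dominating_set_def)
      moreover have "\<And>u. pend_E V E (Inr (v,False)) u \<Longrightarrow> u = Inl v"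
        subgoal for u by (cases u) auto done
      ultimately show ?thesis using False v by (auto simp: h_def)
    qed
  qed
  have "inj_on h V" unfolding inj_on_def h_def by auto
  hence "card V \<le> card S" using card_inj_on_le[OF _ hS finS] by blast
  hence dn: "domination_number (pend_V V) (pend_E V E) = card V" using dn1 S(2) by simp
  have up: "gamma_rdR (pend_V V) (pend_E V E) \<le> 4 * card V"
    using part1[OF g'] dn card_pend[OF fin] by simp
  obtain f0 where f0: "rdrd_fun (pend_V V) (pend_E V E) f0"
  proof -
    obtain T where T: "dominating_set (pend_V V) (pend_E V E) T" using dom by blast
    define f where "f v = (if v \<in> T then 2 else (1::nat))" for v
    have "rdrd_fun (pend_V V) (pend_E V E) f"
      unfolding rdrd_fun_def
    proof (intro conjI ballI impI)
      fix v assume "v \<in> pend_V V" "f v = 1"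
      hence "v \<notin> T" by (auto simp: f_def)
      then obtain u where "u \<in> T" "pend_E V E v u" using T \<open>v \<in> pend_V V\<close> by (auto simp: dominating_set_def)
      thus "\<exists>u\<in>pend_V V. pend_E V E v u \<and> (f u = 2 \<or> f u = 3)" using T by (auto simp: f_def dominating_set_def)
    qed (auto simp: f_def split: if_splits)
    thus ?thesis using that by blast
  qed
  have lo: "4 * card V \<le> gamma_rdR (pend_V V) (pend_E V E)"
  proof (rule rdR_ge[OF fin' f0])
    fix f assume r: "rdrd_fun (pend_V V) (pend_E V E) f"
    have "4 * card V = (\<Sum>v\<in>V. 4)" by simp
    also have "\<dots> \<le> (\<Sum>v\<in>V. f (Inl v) + f (Inr (v,False)) + f (Inr (v,True)))"
      by (rule sum_mono) (rule local4[OF r])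
    also have "\<dots> = (\<Sum>x\<in>pend_V V. f x)" by (rule sum_pend[OF fin, symmetric])
    finally show "4 * card V \<le> (\<Sum>x\<in>pend_V V. f x)" .
  qed
  show ?thesis using up lo dn card_pend[OF fin] by simp
qed

theorem proposition2p5:
  shows "(\<forall>(V :: 'a set) E. graph V E \<longrightarrow>
            gamma_rdR V E \<le> card V + domination_number V E)
       \<and> (\<forall>(V :: 'b set) E. graph V E \<longrightarrow> (\<forall>v\<in>V. \<exists>u. E v u) \<longrightarrow>
            gamma_rdR (pend_V V) (pend_E V E)
              = card (pend_V V) + domination_number (pend_V V) (pend_E V E))"
  using part1 part2 by blast

end
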